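(* Let $T$ be a left-linear term rewriting system and $\psi$ a convergent proof term for $T$. Then (a) $tgt(\psi)$ is defined; and (b) for every $n<\omega$, if $mind(\psi)>n$ then $d(src(\psi),tgt(\psi))<2^{-n}$.
   Context: Setting. $T=(\Sigma,R)$: $\Sigma$ finite; rules $\mu: l\to r$ with $l$ finite, non-variable, linear, variables of $r$ among those of $l$; $r$ may be infinite. Terms are finite or infinite trees; $d(t,u)=0$ if $t=u$ and $2^{-k}$ otherwise, $k$ the least length of a position where $t$ and $u$ differ; limits are w.r.t. $d$. Multisteps. $\Sigma^R$ is $\Sigma$ plus a symbol $\mu$ of arity $n$ for each rule $\mu: l[x_1,..,x_n]\to r[x_1,..,x_n]$. A multistep is a closed finite or infinite term over $\Sigma^R$; $src$ = its normal form under $\mu(\vec x)\to l[\vec x]$, $tgt$ = its normal form (if any, via strongly convergent reduction) under $\mu(\vec x)\to r[\vec x]$; convergent iff $tgt$ defined; $mind=\omega$ if no rule symbol, else the least depth of a rule-symbol occurrence. Proof terms (over $\Sigma^R\cup\{\cdot/2\}$) with partial $src,tgt$, convergence and $mind$: the least set closed under (i) multisteps; (ii) $\psi_1\cdot\psi_2$ for $\psi_1$ convergent, $tgt(\psi_1)=src(\psi_2)$: $src=src(\psi_1)$, $tgt=tgt(\psi_2)$, convergent iff $\psi_2$ is, $mind=\min$; (iii) $\prod_{i<\omega}\psi_i=\psi_0\cdot(\psi_1\cdot\cdots)$ for convergent $\psi_i$ with $tgt(\psi_i)=src(\psi_{i+1})$: $src=src(\psi_0)$, $tgt=\lim_i tgt(\psi_i)$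 (undefined if no limit), $mind=\min_i mind(\psi_i)$, convergent iff for every $k$ there is $n$ with $mind(\psi_j)>k$ for $j>n$; (iv) $f(\psi_1,..,\psi_m)$, $f\in\Sigma$: $src,tgt$ componentwise, convergent iff all $\psi_i$ are, $mind=1+\min$; (v) $\mu(\psi_1,..,\psi_n)$: $src=l[src(\psi_1),..]$, $tgt=r[tgt(\psi_1),..]$, convergent iff $\psi_i$ convergent whenever $x_i$ occurs in $r$, $mind=0$. *)

theory Defs
  imports Complex_Main "HOL-Library.Extended_Nat"
begin

text \<open>A (finite or infinite) term is represented by its labelling function on positions
  (lists of argument indices, 0-based); positions outside the term are mapped to None.\<close>

type_synonym 'a tree = "nat list \<Rightarrow> 'a option"

definition wf_tree :: "('a \<Rightarrow> nat) \<Rightarrow> 'a tree \<Rightarrow> bool" where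
  "wf_tree ar t \<longleftrightarrow> t [] \<noteq> None
     \<and> (\<forall>p a. t p = Some a \<longrightarrow> (\<forall>i. t (p @ [i]) \<noteq> None \<longleftrightarrow> i < ar a))
     \<and> (\<forall>p i. t (p @ [i]) \<noteq> None \<longrightarrow> t p \<noteq> None)"

definition tdist :: "'a tree \<Rightarrow> 'a tree \<Rightarrow> real" where
  "tdist t u = (if t = u then 0
     else (1/2) ^ (LEAST k. \<exists>p. length p = k \<and> t p \<noteq> u p))"

definition subtree :: "'a tree \<Rightarrow> nat list \<Rightarrow> 'a tree" where
  "subtree t p = (\<lambda>q. t (p @ q))"

definition replace :: "'a tree \<Rightarrow> nat list \<Rightarrow> 'a tree \<Rightarrow> 'a tree" where
  "replace t p s = (\<lambda>q. if \<exists>q'. q = p @ q' then s (drop (length p) q) else t q)"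

datatype 'f tsym = Fun 'f | Var nat

text \<open>Symbols of proof terms: Sigma, one symbol per rule, and the binary composition dot.
  Multisteps are the well-formed proof-term trees without Dot; Sigma-terms have only F-symbols.\<close>
datatype ('f, 'r) psym = F 'f | R 'r | Dot

record ('f, 'r) trs =
  sig_ar :: "'f \<Rightarrow> nat"
  rl_ar  :: "'r \<Rightarrow> nat"
  rl_lhs :: "'r \<Rightarrow> 'f tsym tree"
  rl_rhs :: "'r \<Rightarrow> 'f tsym tree"

fun tsym_ar :: "('f \<Rightarrow> nat) \<Rightarrow> 'f tsym \<Rightarrow> nat" where
  "tsym_ar ar (Fun f) = ar f"
| "tsym_ar ar (Var j) = 0"

fun psym_ar :: "('f, 'r) trs \<Rightarrow> ('f, 'r) psym \<Rightarrow> nat" where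
  "psym_ar T (F f) = sig_ar T f"
| "psym_ar T (R \<mu>) = rl_ar T \<mu>"
| "psym_ar T Dot = 2"

definition tvars :: "'f tsym tree \<Rightarrow> nat set" where
  "tvars s = {j. \<exists>p. s p = Some (Var j)}"

definition linear_tree :: "'f tsym tree \<Rightarrow> bool" where
  "linear_tree s \<longleftrightarrow> (\<forall>p q j. s p = Some (Var j) \<and> s q = Some (Var j) \<longrightarrow> p = q)"

definition wf_trs :: "('f, 'r) trs \<Rightarrow> bool" where
  "wf_trs T \<longleftrightarrow> finite (UNIV :: 'f set) \<and>
     (\<forall>\<mu>. wf_tree (tsym_ar (sig_ar T)) (rl_lhs T \<mu>)
         \<and> finite {p. rl_lhs T \<mu> p \<noteq> None}
         \<and> (\<exists>f. rl_lhs T \<mu> [] = Some (Fun f))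
         \<and> linear_tree (rl_lhs T \<mu>)
         \<and> tvars (rl_lhs T \<mu>) = {..<rl_ar T \<mu>}
         \<and> wf_tree (tsym_ar (sig_ar T)) (rl_rhs T \<mu>)
         \<and> tvars (rl_rhs T \<mu>) \<subseteq> tvars (rl_lhs T \<mu>))"

definition inst :: "'f tsym tree \<Rightarrow> (nat \<Rightarrow> ('f, 'r) psym tree) \<Rightarrow> ('f, 'r) psym tree" where
  "inst s \<sigma> = (\<lambda>q.
     if \<exists>k j. k \<le> length q \<and> s (take k q) = Some (Var j) then
       (let k = (LEAST k. \<exists>j. k \<le> length q \<and> s (take k q) = Some (Var j))
        in \<sigma> (THE j. s (take k q) = Some (Var j)) (drop k q))
     else (case s q of Some (Fun f) \<Rightarrow> Some (F f) | _ \<Rightarrow> None))"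

definition inst_opt :: "'f tsym tree \<Rightarrow> (nat \<Rightarrow> ('f, 'r) psym tree option) \<Rightarrow> ('f, 'r) psym tree option" where
  "inst_opt s \<sigma> = (if \<forall>j \<in> tvars s. \<sigma> j \<noteq> None then Some (inst s (\<lambda>j. the (\<sigma> j))) else None)"

definition is_multistep :: "('f, 'r) trs \<Rightarrow> ('f, 'r) psym tree \<Rightarrow> bool" where
  "is_multistep T \<psi> \<longleftrightarrow> wf_tree (psym_ar T) \<psi> \<and> (\<forall>p. \<psi> p \<noteq> Some Dot)"

definition rstep :: "('r \<Rightarrow> 'f tsym tree) \<Rightarrow> ('f, 'r) psym tree \<Rightarrow> ('f, 'r) psym tree \<Rightarrow> nat list \<Rightarrow> bool" where
  "rstep side t t' p \<longleftrightarrow> (\<exists>\<mu>. t p = Some (R \<mu>) \<and>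
      t' = replace t p (inst (side \<mu>) (\<lambda>j. subtree t (p @ [j]))))"

text \<open>Strongly convergent reductions of length at most omega (finite, or omega-long with
  depths of contracted redexes tending to infinity and terms converging to the end term).\<close>
definition scred :: "('r \<Rightarrow> 'f tsym tree) \<Rightarrow> ('f, 'r) psym tree \<Rightarrow> ('f, 'r) psym tree \<Rightarrow> bool" where
  "scred side t u \<longleftrightarrow>
     (\<lambda>a b. \<exists>p. rstep side a b p)\<^sup>*\<^sup>* t u
     \<or> (\<exists>ts ps. ts 0 = t \<and> (\<forall>i. rstep side (ts i) (ts (Suc i)) (ps i))
          \<and> filterlim (\<lambda>i. length (ps i)) at_top sequentially
          \<and> (\<lambda>i. tdist (ts i) u) \<longlonglongrightarrow> 0)"

definition no_rule_sym :: "('f, 'r) psym tree \<Rightarrow> bool" where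
  "no_rule_sym u \<longleftrightarrow> (\<forall>p \<mu>. u p \<noteq> Some (R \<mu>))"

definition nform :: "('r \<Rightarrow> 'f tsym tree) \<Rightarrow> ('f, 'r) psym tree \<Rightarrow> ('f, 'r) psym tree option" where
  "nform side t = (if \<exists>u. scred side t u \<and> no_rule_sym u
                   then Some (THE u. scred side t u \<and> no_rule_sym u) else None)"

definition ms_mind :: "('f, 'r) psym tree \<Rightarrow> enat" where
  "ms_mind \<psi> = (if \<exists>p \<mu>. \<psi> p = Some (R \<mu>)
                 then enat (LEAST n. \<exists>p \<mu>. length p = n \<and> \<psi> p = Some (R \<mu>)) else \<infinity>)"

definition node :: "'a \<Rightarrow> 'a tree list \<Rightarrow> 'a tree" where
  "node a ts = (\<lambda>p. case p of [] \<Rightarrow> Some a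
                    | i # q \<Rightarrow> if i < length ts then (ts ! i) q else None)"

definition dot :: "('f, 'r) psym tree \<Rightarrow> ('f, 'r) psym tree \<Rightarrow> ('f, 'r) psym tree" where
  "dot a b = node Dot [a, b]"

text \<open>Infinite product  psi_0 . (psi_1 . (psi_2 . ...)).\<close>
fun iprod :: "(nat \<Rightarrow> ('f, 'r) psym tree) \<Rightarrow> ('f, 'r) psym tree" where
  "iprod \<psi> [] = Some Dot"
| "iprod \<psi> (i # q) = (if i = 0 then \<psi> 0 q
                       else if i = 1 then iprod (\<lambda>k. \<psi> (Suc k)) q else None)"

text \<open>PT T psi s t c m: psi is a proof term with src s, (partial) tgt t, convergence c and mind m.\<close>
inductive PT :: "('f, 'r) trs \<Rightarrow> ('f, 'r) psym tree \<Rightarrow> ('f, 'r) psym tree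
                 \<Rightarrow> ('f, 'r) psym tree option \<Rightarrow> bool \<Rightarrow> enat \<Rightarrow> bool"
  for T :: "('f, 'r) trs" where
  multistep: "is_multistep T \<psi> \<Longrightarrow>
     PT T \<psi> (the (nform (rl_lhs T) \<psi>)) (nform (rl_rhs T) \<psi>)
        (nform (rl_rhs T) \<psi> \<noteq> None) (ms_mind \<psi>)"
| comp: "PT T \<psi>1 s1 (Some t1) True m1 \<Longrightarrow> PT T \<psi>2 t1 t2 c2 m2 \<Longrightarrow>
     PT T (dot \<psi>1 \<psi>2) s1 t2 c2 (min m1 m2)"
| infprod: "(\<And>i. PT T (\<psi> i) (s i) (Some (s (Suc i))) True (m i)) \<Longrightarrow>
     PT T (iprod \<psi>) (s 0)
        (if \<exists>u. (\<lambda>i. tdist (s (Suc i)) u) \<longlonglongrightarrow> 0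
         then Some (THE u. (\<lambda>i. tdist (s (Suc i)) u) \<longlonglongrightarrow> 0) else None)
        (\<forall>k::nat. \<exists>n. \<forall>j>n. enat k < m j)
        (INF i. m i)"
| func: "length \<psi>s = sig_ar T f \<Longrightarrow> length ss = length \<psi>s \<Longrightarrow> length ts = length \<psi>s \<Longrightarrow>
     length cs = length \<psi>s \<Longrightarrow> length ms = length \<psi>s \<Longrightarrow>
     (\<forall>i < length \<psi>s. PT T (\<psi>s ! i) (ss ! i) (ts ! i) (cs ! i) (ms ! i)) \<Longrightarrow>
     PT T (node (F f) \<psi>s) (node (F f) ss)
        (if \<forall>i < length ts. ts ! i \<noteq> None then Some (node (F f) (map the ts)) else None)
        (\<forall>i < length cs. cs ! i)
        (1 + (INF i \<in> {..<length ms}. ms ! i))"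
| rule: "length \<psi>s = rl_ar T \<mu> \<Longrightarrow> length ss = length \<psi>s \<Longrightarrow> length ts = length \<psi>s \<Longrightarrow>
     length cs = length \<psi>s \<Longrightarrow> length ms = length \<psi>s \<Longrightarrow>
     (\<forall>i < length \<psi>s. PT T (\<psi>s ! i) (ss ! i) (ts ! i) (cs ! i) (ms ! i)) \<Longrightarrow>
     PT T (node (R \<mu>) \<psi>s) (inst (rl_lhs T \<mu>) (\<lambda>j. ss ! j))
        (inst_opt (rl_rhs T \<mu>) (\<lambda>j. ts ! j))
        (\<forall>i < length cs. i \<in> tvars (rl_rhs T \<mu>) \<longrightarrow> cs ! i)
        0"

end

theory Submission
  imports Defs
begin

definition agree :: "nat \<Rightarrow> 'a tree \<Rightarrow> 'a tree \<Rightarrow> bool" where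
  "agree n t u \<longleftrightarrow> (\<forall>q. length q \<le> n \<longrightarrow> t q = u q)"

lemma tdist_lt_iff: "tdist t u < (1/2)^n \<longleftrightarrow> agree n t u"
proof (cases "t = u")
  case True then show ?thesis by (simp add: tdist_def agree_def)
next
  case False
  then obtain p where p: "t p \<noteq> u p" by auto
  define K where "K = (LEAST k. \<exists>p. length p = k \<and> t p \<noteq> u p)"
  have ex: "\<exists>p. length p = K \<and> t p \<noteq> u p" unfolding K_def
    by (rule LeastI[of _ "length p"]) (use p in auto)
  have min: "\<And>q. t q \<noteq> u q \<Longrightarrow> K \<le> length q" unfolding K_def
    by (rule Least_le) auto
  have d: "tdist t u = (1/2)^K" using False by (simp add: tdist_def K_def)
  have "(1/2::real)^K < (1/2)^n \<longleftrightarrow> n < K" by (simp add: power_strict_decreasing_iff)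
  moreover have "agree n t u \<longleftrightarrow> n < K"
    using ex min unfolding agree_def by (meson le_trans not_le)
  ultimately show ?thesis using d by simp
qed

lemma agree_trans: "agree n a b \<Longrightarrow> agree n b c \<Longrightarrow> agree n a c"
  by (simp add: agree_def)
lemma agree_sym: "agree n a b \<Longrightarrow> agree n b a"
  by (simp add: agree_def)
lemma agree_mono: "agree n a b \<Longrightarrow> k \<le> n \<Longrightarrow> agree k a b"
  by (simp add: agree_def)

lemma tdist_tendsto_agree:
  assumes "(\<lambda>i. tdist (x i) u) \<longlonglongrightarrow> 0"
  shows "\<exists>N. \<forall>i\<ge>N. agree k (x i) u"
proof -
  have "(0::real) < (1/2)^k" by simp
  from LIMSEQ_D[OF assms this] obtain N where N: "\<forall>i\<ge>N. norm (tdist (x i) u - 0) < (1/2)^k" by blast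
  have "tdist (x i) u \<ge> 0" for i by (simp add: tdist_def)
  then show ?thesis using N tdist_lt_iff by fastforce
qed

lemma tendsto_uniq_tree:
  assumes "(\<lambda>i. tdist (x i) u) \<longlonglongrightarrow> 0" "(\<lambda>i. tdist (x i) v) \<longlonglongrightarrow> 0"
  shows "u = v"
proof
  fix q :: "nat list"
  obtain N1 where "\<forall>i\<ge>N1. agree (length q) (x i) u" using tdist_tendsto_agree[OF assms(1)] by blast
  moreover obtain N2 where "\<forall>i\<ge>N2. agree (length q) (x i) v" using tdist_tendsto_agree[OF assms(2)] by blast
  ultimately have "agree (length q) (x (max N1 N2)) u" "agree (length q) (x (max N1 N2)) v" by auto
  then show "u q = v q" by (auto simp: agree_def)
qed

lemma agree_tendsto:
  assumes "\<And>k. \<exists>N. \<forall>i\<ge>N. agree k (x i) u"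
  shows "(\<lambda>i. tdist (x i) u) \<longlonglongrightarrow> 0"
proof (rule LIMSEQ_I)
  fix r :: real assume r: "0 < r"
  obtain k where k: "(1/2::real)^k < r" using real_arch_pow_inv[OF r, of "1/2"] by auto
  obtain N where N: "\<forall>i\<ge>N. agree k (x i) u" using assms by blast
  have "tdist (x i) u \<ge> 0" for i by (simp add: tdist_def)
  then show "\<exists>N. \<forall>i\<ge>N. norm (tdist (x i) u - 0) < r"
    using N k tdist_lt_iff by (metis abs_of_nonneg diff_zero less_trans real_norm_def)
qed

inductive tr :: "('r \<Rightarrow> 'f tsym tree) \<Rightarrow> ('f,'r) psym tree \<Rightarrow> nat list \<Rightarrow> ('f,'r) psym \<Rightarrow> bool"
  for side where
  base: "\<psi> [] = Some a \<Longrightarrow> (\<forall>\<mu>. a \<noteq> R \<mu>) \<Longrightarrow> tr side \<psi> [] a"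
| desc: "(\<forall>\<mu>. \<psi> [] \<noteq> Some (R \<mu>)) \<Longrightarrow> tr side (subtree \<psi> [i]) q a \<Longrightarrow> tr side \<psi> (i#q) a"
| rvar: "\<psi> [] = Some (R \<mu>) \<Longrightarrow> k \<le> length q \<Longrightarrow> side \<mu> (take k q) = Some (Var j) \<Longrightarrow>
     (\<forall>k'<k. \<forall>j'. side \<mu> (take k' q) \<noteq> Some (Var j')) \<Longrightarrow> tr side (subtree \<psi> [j]) (drop k q) a \<Longrightarrow>
     tr side \<psi> q a"
| rfun: "\<psi> [] = Some (R \<mu>) \<Longrightarrow> (\<forall>k\<le>length q. \<forall>j. side \<mu> (take k q) \<noteq> Some (Var j)) \<Longrightarrow>
     side \<mu> q = Some (Fun f) \<Longrightarrow> tr side \<psi> q (F f)"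

definition icond :: "('a \<Rightarrow> nat list \<Rightarrow> ('f,'r) psym \<Rightarrow> bool) \<Rightarrow> 'f tsym tree \<Rightarrow> (nat \<Rightarrow> 'a) \<Rightarrow> nat list \<Rightarrow> ('f,'r) psym \<Rightarrow> bool" where
  "icond P s \<sigma> q a \<longleftrightarrow>
    (\<exists>k j. k \<le> length q \<and> s (take k q) = Some (Var j) \<and> (\<forall>k'<k. \<forall>j'. s (take k' q) \<noteq> Some (Var j'))
       \<and> P (\<sigma> j) (drop k q) a)
  \<or> ((\<forall>k\<le>length q. \<forall>j. s (take k q) \<noteq> Some (Var j)) \<and> (\<exists>f. s q = Some (Fun f) \<and> a = F f))"

lemma tr_R: "\<psi> [] = Some (R \<mu>) \<Longrightarrow> tr side \<psi> q a \<longleftrightarrow> icond (tr side) (side \<mu>) (\<lambda>j. subtree \<psi> [j]) q a"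
  apply (rule iffI)
   apply (erule tr.cases; auto simp: icond_def)
  apply (auto simp: icond_def intro: tr.intros)
  done

lemma tr_nil: "(\<forall>\<mu>. \<psi> [] \<noteq> Some (R \<mu>)) \<Longrightarrow> tr side \<psi> [] a \<longleftrightarrow> \<psi> [] = Some a"
  apply (rule iffI)
   apply (erule tr.cases; auto)
  apply (rule tr.base; auto)
  done

lemma tr_desc_iff: "(\<forall>\<mu>. \<psi> [] \<noteq> Some (R \<mu>)) \<Longrightarrow> tr side \<psi> (i#q) a \<longleftrightarrow> tr side (subtree \<psi> [i]) q a"
  apply (rule iffI)
   apply (erule tr.cases; auto)
  apply (rule tr.desc; auto)
  done

lemma subtree_subtree: "subtree (subtree \<psi> p) q = subtree \<psi> (p @ q)"
  by (simp add: subtree_def)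

lemma tr_L2: "(\<forall>k<length p. \<forall>\<mu>. \<psi> (take k p) \<noteq> Some (R \<mu>)) \<Longrightarrow>
   tr side \<psi> (p@q) a \<longleftrightarrow> tr side (subtree \<psi> p) q a"
proof (induction p arbitrary: \<psi>)
  case Nil then show ?case by (simp add: subtree_def)
next
  case (Cons i p)
  have r: "\<forall>\<mu>. \<psi> [] \<noteq> Some (R \<mu>)" using Cons.prems by force
  have "\<forall>k<length p. \<forall>\<mu>. subtree \<psi> [i] (take k p) \<noteq> Some (R \<mu>)"
  proof (intro allI impI)
    fix k \<mu> assume "k < length p"
    then have "\<psi> (take (Suc k) (i#p)) \<noteq> Some (R \<mu>)" using Cons.prems by auto
    then show "subtree \<psi> [i] (take k p) \<noteq> Some (R \<mu>)" by (simp add: subtree_def)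
  qed
  then show ?case using Cons.IH[of "subtree \<psi> [i]"] tr_desc_iff[of \<psi> side i] r
    by (simp add: subtree_subtree)
qed

lemma tr_L1: "(\<forall>k\<le>length q. \<forall>\<mu>. \<psi> (take k q) \<noteq> Some (R \<mu>)) \<Longrightarrow> tr side \<psi> q a \<longleftrightarrow> \<psi> q = Some a"
proof -
  assume h: "\<forall>k\<le>length q. \<forall>\<mu>. \<psi> (take k q) \<noteq> Some (R \<mu>)"
  then have "tr side \<psi> (q@[]) a \<longleftrightarrow> tr side (subtree \<psi> q) [] a"
    by (intro tr_L2) auto
  moreover have "\<forall>\<mu>. subtree \<psi> q [] \<noteq> Some (R \<mu>)" using h[rule_format, of "length q"] by (simp add: subtree_def)
  ultimately show ?thesis using tr_nil[of "subtree \<psi> q" side a] by (simp add: subtree_def)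
qed

lemma tr_notR: "tr side \<psi> q a \<Longrightarrow> \<forall>\<mu>. a \<noteq> R \<mu>"
  by (induction rule: tr.induct) auto

lemma inst_nov: "(\<forall>k\<le>length q. \<forall>j. s (take k q) \<noteq> Some (Var j)) \<Longrightarrow>
   inst s \<sigma> q = (case s q of Some (Fun f) \<Rightarrow> Some (F f) | _ \<Rightarrow> None)"
proof -
  assume "\<forall>k\<le>length q. \<forall>j. s (take k q) \<noteq> Some (Var j)"
  then have ne: "\<not> (\<exists>k j. k \<le> length q \<and> s (take k q) = Some (Var j))" by blast
  show ?thesis unfolding inst_def if_not_P[OF ne] ..
qed

lemma inst_var: assumes "k \<le> length q" "s (take k q) = Some (Var j)"
   "\<forall>k'<k. \<forall>j'. s (take k' q) \<noteq> Some (Var j')"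
  shows "inst s \<sigma> q = \<sigma> j (drop k q)"
proof -
  have L: "(LEAST k. \<exists>j. k \<le> length q \<and> s (take k q) = Some (Var j)) = k"
    apply (rule Least_equality)
    using assms by (auto simp: not_le[symmetric])
  have E: "\<exists>k j. k \<le> length q \<and> s (take k q) = Some (Var j)" using assms by blast
  have T: "(THE j'. s (take k q) = Some (Var j')) = j" using assms(2) by simp
  show ?thesis unfolding inst_def if_P[OF E] Let_def L T ..
qed

lemma take_take_app: "k' \<le> k \<Longrightarrow> k \<le> length q \<Longrightarrow> take k' (take k q @ r) = take k' q"
  by (simp add: min_def)

lemma inst_notR: "(\<forall>k\<le>length q. \<forall>j. s (take k q) \<noteq> Some (Var j)) \<Longrightarrow> inst s \<sigma> q \<noteq> Some (R \<mu>)"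
  by (simp add: inst_nov split: option.split tsym.split)

lemma inst_tr: "tr side (inst s \<sigma>) q a \<longleftrightarrow> icond (tr side) s \<sigma> q a"
proof (cases "\<exists>k j. k \<le> length q \<and> s (take k q) = Some (Var j)")
  case True
  define k where "k = (LEAST k. \<exists>j. k \<le> length q \<and> s (take k q) = Some (Var j))"
  have "\<exists>j. k \<le> length q \<and> s (take k q) = Some (Var j)"
    unfolding k_def using True by (rule LeastI_ex)
  then obtain j where kq: "k \<le> length q" and kj: "s (take k q) = Some (Var j)" by blast
  have kmin: "\<forall>k'<k. \<forall>j'. s (take k' q) \<noteq> Some (Var j')"
  proof (intro allI impI)
    fix k' j' assume k': "k' < k"
    then have "\<not> (\<exists>j. k' \<le> length q \<and> s (take k' q) = Some (Var j))"
      unfolding k_def by (rule not_less_Least)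
    then show "s (take k' q) \<noteq> Some (Var j')" using k' kq by auto
  qed
  have lk: "length (take k q) = k" using kq by simp
  have sub: "subtree (inst s \<sigma>) (take k q) = \<sigma> j"
  proof
    fix r
    have "inst s \<sigma> (take k q @ r) = \<sigma> j (drop k (take k q @ r))"
    proof (rule inst_var)
      show "k \<le> length (take k q @ r)" using lk by simp
      show "s (take k (take k q @ r)) = Some (Var j)" unfolding take_take_app[OF le_refl kq] by (rule kj)
      show "\<forall>k'<k. \<forall>j'. s (take k' (take k q @ r)) \<noteq> Some (Var j')"
        using kmin take_take_app[OF _ kq] by (metis less_imp_le)
    qed
    then show "subtree (inst s \<sigma>) (take k q) r = \<sigma> j r" using lk by (simp add: subtree_def)
  qed
  have pre: "\<forall>k'<length (take k q). \<forall>\<mu>. inst s \<sigma> (take k' (take k q)) \<noteq> Some (R \<mu>)"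
  proof (intro allI impI)
    fix k' \<mu> assume "k' < length (take k q)"
    then have k': "k' < k" by simp
    have tk: "take k' (take k q) = take k' q" using k' by (simp add: min_def)
    have "\<forall>k''\<le>length (take k' q). \<forall>j. s (take k'' (take k' q)) \<noteq> Some (Var j)"
    proof (intro allI impI)
      fix k'' j assume "k'' \<le> length (take k' q)"
      then have "k'' < k" "take k'' (take k' q) = take k'' q" using k' by (auto simp: min_def split: if_splits)
      then show "s (take k'' (take k' q)) \<noteq> Some (Var j)" using kmin by simp
    qed
    then show "inst s \<sigma> (take k' (take k q)) \<noteq> Some (R \<mu>)" unfolding tk by (rule inst_notR)
  qed
  have "tr side (inst s \<sigma>) q a \<longleftrightarrow> tr side (\<sigma> j) (drop k q) a"
    using tr_L2[OF pre, of side "drop k q" a] sub by simp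
  moreover have "icond (tr side) s \<sigma> q a \<longleftrightarrow> tr side (\<sigma> j) (drop k q) a"
  proof
    assume "icond (tr side) s \<sigma> q a"
    then show "tr side (\<sigma> j) (drop k q) a" unfolding icond_def
    proof
      assume "\<exists>k j. k \<le> length q \<and> s (take k q) = Some (Var j) \<and> (\<forall>k'<k. \<forall>j'. s (take k' q) \<noteq> Some (Var j')) \<and> tr side (\<sigma> j) (drop k q) a"
      then obtain k2 j2 where h: "k2 \<le> length q" "s (take k2 q) = Some (Var j2)"
        "\<forall>k'<k2. \<forall>j'. s (take k' q) \<noteq> Some (Var j')" "tr side (\<sigma> j2) (drop k2 q) a" by blast
      have "k2 = k"
      proof (rule linorder_cases[of k2 k])
        assume "k2 < k" then show ?thesis using kmin h(2) by blast
      next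
        assume "k < k2" then show ?thesis using h(3) kj by blast
      qed
      then show ?thesis using h kj by simp
    next
      assume "(\<forall>k\<le>length q. \<forall>j. s (take k q) \<noteq> Some (Var j)) \<and> (\<exists>f. s q = Some (Fun f) \<and> a = F f)"
      then show ?thesis using kq kj by blast
    qed
  next
    assume "tr side (\<sigma> j) (drop k q) a"
    then show "icond (tr side) s \<sigma> q a" unfolding icond_def using kq kj kmin by blast
  qed
  ultimately show ?thesis by simp
next
  case False
  then have nv: "\<forall>k\<le>length q. \<forall>j. s (take k q) \<noteq> Some (Var j)" by blast
  have pre: "\<forall>k\<le>length q. \<forall>\<mu>. inst s \<sigma> (take k q) \<noteq> Some (R \<mu>)"
  proof (intro allI impI)
    fix k \<mu> assume k: "k \<le> length q"
    have "\<forall>k''\<le>length (take k q). \<forall>j. s (take k'' (take k q)) \<noteq> Some (Var j)"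
      using nv k by (simp add: min_def)
    then show "inst s \<sigma> (take k q) \<noteq> Some (R \<mu>)" by (rule inst_notR)
  qed
  have "tr side (inst s \<sigma>) q a \<longleftrightarrow> inst s \<sigma> q = Some a" by (rule tr_L1[OF pre])
  also have "\<dots> \<longleftrightarrow> (\<exists>f. s q = Some (Fun f) \<and> a = F f)"
    using inst_nov[OF nv, of \<sigma>] by (auto split: option.splits tsym.splits)
  also have "\<dots> \<longleftrightarrow> icond (tr side) s \<sigma> q a" unfolding icond_def using nv by blast
  finally show ?thesis .
qed

lemma tr_cong:
  assumes "\<psi>' [] = \<psi> []" "\<And>j r b. tr side (subtree \<psi>' [j]) r b \<longleftrightarrow> tr side (subtree \<psi> [j]) r b"
  shows "tr side \<psi>' q a \<longleftrightarrow> tr side \<psi> q a"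
proof (cases "\<exists>\<mu>. \<psi> [] = Some (R \<mu>)")
  case True
  then obtain \<mu> where m: "\<psi> [] = Some (R \<mu>)" by blast
  then have m': "\<psi>' [] = Some (R \<mu>)" using assms(1) by simp
  show ?thesis unfolding tr_R[where \<psi>=\<psi>, OF m] tr_R[where \<psi>=\<psi>', OF m'] icond_def using assms(2) by simp
next
  case False
  then have n: "\<forall>\<mu>. \<psi> [] \<noteq> Some (R \<mu>)" "\<forall>\<mu>. \<psi>' [] \<noteq> Some (R \<mu>)" using assms(1) by auto
  show ?thesis
  proof (cases q)
    case Nil then show ?thesis using tr_nil[where \<psi>=\<psi>, OF n(1)] tr_nil[where \<psi>=\<psi>', OF n(2)] assms(1) by simp
  next
    case (Cons i q') then show ?thesis using tr_desc_iff[of \<psi> side] tr_desc_iff[of \<psi>' side] n assms(2) by simp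
  qed
qed

lemma replace_nil: "replace t [] X = X"
  by (simp add: replace_def)

lemma replace_root: "replace t (i#p) X [] = t []"
  by (simp add: replace_def)

lemma subtree_replace: "subtree (replace t (i#p) X) [j] = (if j = i then replace (subtree t [i]) p X else subtree t [j])"
  by (auto simp: subtree_def replace_def)

lemma tr_step: "rstep side \<psi> \<psi>' p \<Longrightarrow> tr side \<psi>' q a \<longleftrightarrow> tr side \<psi> q a"
proof (induction p arbitrary: \<psi> \<psi>' q a)
  case Nil
  then obtain \<mu> where m: "\<psi> [] = Some (R \<mu>)" and e: "\<psi>' = inst (side \<mu>) (\<lambda>j. subtree \<psi> [j])"
    by (auto simp: rstep_def replace_nil)
  show ?case unfolding e inst_tr tr_R[where \<psi>=\<psi>, OF m] ..
next
  case (Cons i p)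
  then obtain \<mu> where m: "\<psi> (i#p) = Some (R \<mu>)"
    and e: "\<psi>' = replace \<psi> (i#p) (inst (side \<mu>) (\<lambda>j. subtree \<psi> (i#p @ [j])))"
    by (auto simp: rstep_def)
  have st: "rstep side (subtree \<psi> [i]) (subtree \<psi>' [i]) p"
    unfolding rstep_def e subtree_replace using m by (intro exI[of _ \<mu>]) (simp add: subtree_def)
  show ?case
  proof (rule tr_cong)
    show "\<psi>' [] = \<psi> []" unfolding e replace_root ..
    fix j r b
    show "tr side (subtree \<psi>' [j]) r b \<longleftrightarrow> tr side (subtree \<psi> [j]) r b"
    proof (cases "j = i")
      case True then show ?thesis using Cons.IH[OF st] by simp
    next
      case False then show ?thesis unfolding e subtree_replace by simp
    qed
  qed
qed

lemma tr_steps: "(\<lambda>a b. \<exists>p. rstep side a b p)\<^sup>*\<^sup>* \<psi> \<psi>' \<Longrightarrow> tr side \<psi>' q a \<longleftrightarrow> tr side \<psi> q a"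
  by (induction rule: rtranclp_induct) (auto simp: tr_step)

lemma nf_char:
  assumes "scred side \<psi> u" "no_rule_sym u"
  shows "u q = Some a \<longleftrightarrow> tr side \<psi> q a"
proof -
  have nr: "\<forall>k\<le>length q. \<forall>\<mu>. u (take k q) \<noteq> Some (R \<mu>)" using assms(2) by (simp add: no_rule_sym_def)
  show ?thesis using assms(1) unfolding scred_def
  proof
    assume "(\<lambda>a b. \<exists>p. rstep side a b p)\<^sup>*\<^sup>* \<psi> u"
    then show ?thesis using tr_steps tr_L1[OF nr] by metis
  next
    assume "\<exists>ts ps. ts 0 = \<psi> \<and> (\<forall>i. rstep side (ts i) (ts (Suc i)) (ps i))
          \<and> filterlim (\<lambda>i. length (ps i)) at_top sequentially
          \<and> (\<lambda>i. tdist (ts i) u) \<longlonglongrightarrow> 0"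
    then obtain ts ps where h: "ts 0 = \<psi>" "\<forall>i. rstep side (ts i) (ts (Suc i)) (ps i)"
       "(\<lambda>i. tdist (ts i) u) \<longlonglongrightarrow> 0" by blast
    have inv: "tr side (ts i) q' b \<longleftrightarrow> tr side \<psi> q' b" for i q' b
      by (induction i) (simp_all add: h(1)[symmetric] tr_step[OF h(2)[rule_format]])
    obtain N where "\<forall>i\<ge>N. agree (length q) (ts i) u" using tdist_tendsto_agree[OF h(3)] by blast
    then have ag: "agree (length q) (ts N) u" by simp
    have nr': "\<forall>k\<le>length q. \<forall>\<mu>. ts N (take k q) \<noteq> Some (R \<mu>)"
      using nr ag by (simp add: agree_def)
    have "ts N q = u q" using ag by (simp add: agree_def)
    then show ?thesis using tr_L1[OF nr', of side a] inv by simp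
  qed
qed

lemma nform_eq:
  assumes "scred side \<psi> u" "no_rule_sym u"
  shows "nform side \<psi> = Some u"
proof -
  have "(THE u. scred side \<psi> u \<and> no_rule_sym u) = u"
  proof (rule the_equality)
    show "scred side \<psi> u \<and> no_rule_sym u" using assms by simp
    fix v assume v: "scred side \<psi> v \<and> no_rule_sym v"
    show "v = u"
    proof
      fix q
      show "v q = u q" using nf_char[OF assms, of q] nf_char[of side \<psi> v q] v
        by (cases "v q"; cases "u q") auto
    qed
  qed
  then show ?thesis using assms unfolding nform_def by auto
qed

definition Rd :: "nat \<Rightarrow> ('f,'r) psym tree \<Rightarrow> nat list set" where
  "Rd d t = {q. length q \<le> d \<and> (\<exists>\<mu>. t q = Some (R \<mu>))}"

definition vk :: "'f tsym tree \<Rightarrow> nat list \<Rightarrow> nat" where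
  "vk L r = (LEAST k. \<exists>j. k \<le> length r \<and> L (take k r) = Some (Var j))"
definition vj :: "'f tsym tree \<Rightarrow> nat list \<Rightarrow> nat" where
  "vj L r = (THE j. L (take (vk L r) r) = Some (Var j))"

lemma vk_props:
  assumes "\<exists>k j. k \<le> length r \<and> L (take k r) = Some (Var j)"
  shows "vk L r \<le> length r \<and> L (take (vk L r) r) = Some (Var (vj L r))
     \<and> (\<forall>k'<vk L r. \<forall>j'. L (take k' r) \<noteq> Some (Var j'))"
proof -
  have "\<exists>j. vk L r \<le> length r \<and> L (take (vk L r) r) = Some (Var j)"
    unfolding vk_def using assms by (rule LeastI_ex)
  then obtain j where a: "vk L r \<le> length r" "L (take (vk L r) r) = Some (Var j)" by blast
  have b: "vj L r = j" unfolding vj_def using a(2) by simp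
  have c: "\<forall>k'<vk L r. \<forall>j'. L (take k' r) \<noteq> Some (Var j')"
  proof (intro allI impI)
    fix k' j' assume k': "k' < vk L r"
    then have "\<not> (\<exists>j. k' \<le> length r \<and> L (take k' r) = Some (Var j))"
      unfolding vk_def by (rule not_less_Least)
    then show "L (take k' r) \<noteq> Some (Var j')" using k' a(1) by auto
  qed
  show ?thesis using a b c by simp
qed

lemma replace_out: "\<not> (\<exists>r. q = p @ r) \<Longrightarrow> replace t p X q = t q"
  by (simp add: replace_def)
lemma replace_in: "replace t p X (p @ r) = X r"
  by (simp add: replace_def)

lemma Rd_step:
  assumes st: "rstep side t t' p"
    and sides: "\<forall>\<mu>. (\<exists>f. side \<mu> [] = Some (Fun f)) \<and> linear_tree (side \<mu>)"
    and fin: "finite (Rd d t)"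
  shows "finite (Rd d t') \<and> card (Rd d t') + (if length p \<le> d then 1 else 0) \<le> card (Rd d t)"
proof -
  obtain \<mu> where m: "t p = Some (R \<mu>)"
    and e: "t' = replace t p (inst (side \<mu>) (\<lambda>j. subtree t (p @ [j])))"
    using st by (auto simp: rstep_def)
  define L where "L = side \<mu>"
  define \<sigma> where "\<sigma> = (\<lambda>j. subtree t (p @ [j]))"
  have e': "t' = replace t p (inst L \<sigma>)" using e by (simp add: L_def \<sigma>_def)
  obtain f where Lf: "L [] = Some (Fun f)" using sides by (auto simp: L_def)
  have lin: "linear_tree L" using sides by (simp add: L_def)
  define g where "g = (\<lambda>q. if \<exists>r. q = p @ r then
       p @ [vj L (drop (length p) q)] @ drop (vk L (drop (length p) q)) (drop (length p) q) else q)"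
  have inR: "\<exists>k j. k \<le> length r \<and> L (take k r) = Some (Var j)" if "t' (p @ r) = Some (R \<mu>')" for r \<mu>'
  proof (rule ccontr)
    assume "\<not> ?thesis"
    then have "\<forall>k\<le>length r. \<forall>j. L (take k r) \<noteq> Some (Var j)" by blast
    from inst_notR[OF this, of \<sigma> \<mu>'] that show False by (simp add: e' replace_in)
  qed
  have gin: "g (p @ r) = p @ [vj L r] @ drop (vk L r) r" for r by (simp add: g_def)
  have gout: "\<not> (\<exists>r. q = p @ r) \<Longrightarrow> g q = q" for q by (simp add: g_def)
  have sub: "g ` Rd d t' \<subseteq> Rd d t - {p}"
  proof
    fix y assume "y \<in> g ` Rd d t'"
    then obtain q where q: "q \<in> Rd d t'" and y: "y = g q" by blast
    from q obtain \<mu>' where lq: "length q \<le> d" and tq: "t' q = Some (R \<mu>')" by (auto simp: Rd_def)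
    show "y \<in> Rd d t - {p}"
    proof (cases "\<exists>r. q = p @ r")
      case True
      then obtain r where r: "q = p @ r" by blast
      have E: "\<exists>k j. k \<le> length r \<and> L (take k r) = Some (Var j)" using inR tq r by blast
      note V = vk_props[OF E]
      have k0: "vk L r \<noteq> 0" using V Lf by (metis take0 option.inject tsym.distinct(1))
      have "inst L \<sigma> r = \<sigma> (vj L r) (drop (vk L r) r)" using V by (intro inst_var) auto
      then have "t (p @ [vj L r] @ drop (vk L r) r) = Some (R \<mu>')"
        using tq r by (simp add: e' replace_in \<sigma>_def subtree_def)
      moreover have "length (p @ [vj L r] @ drop (vk L r) r) \<le> d" using lq r k0 V by auto
      ultimately show ?thesis using y r gin by (auto simp: Rd_def)
    next
      case False
      then have "t q = Some (R \<mu>')" using tq by (simp add: e' replace_out)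
      moreover have "q \<noteq> p" using False by auto
      ultimately show ?thesis using y gout[OF False] lq by (auto simp: Rd_def)
    qed
  qed
  have inj: "inj_on g (Rd d t')"
  proof
    fix q1 q2 assume q1: "q1 \<in> Rd d t'" and q2: "q2 \<in> Rd d t'" and eq: "g q1 = g q2"
    show "q1 = q2"
    proof (cases "\<exists>r. q1 = p @ r")
      case True
      then obtain r1 where r1: "q1 = p @ r1" by blast
      show ?thesis
      proof (cases "\<exists>r. q2 = p @ r")
        case True
        then obtain r2 where r2: "q2 = p @ r2" by blast
        obtain \<mu>1 where "t' q1 = Some (R \<mu>1)" using q1 by (auto simp: Rd_def)
        then have E1: "\<exists>k j. k \<le> length r1 \<and> L (take k r1) = Some (Var j)" using inR r1 by blast
        obtain \<mu>2 where "t' q2 = Some (R \<mu>2)" using q2 by (auto simp: Rd_def)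
        then have E2: "\<exists>k j. k \<le> length r2 \<and> L (take k r2) = Some (Var j)" using inR r2 by blast
        note V1 = vk_props[OF E1] and V2 = vk_props[OF E2]
        have "[vj L r1] @ drop (vk L r1) r1 = [vj L r2] @ drop (vk L r2) r2"
          using eq r1 r2 gin by simp
        then have j: "vj L r1 = vj L r2" and dr: "drop (vk L r1) r1 = drop (vk L r2) r2" by auto
        have "take (vk L r1) r1 = take (vk L r2) r2"
          using lin V1 V2 j unfolding linear_tree_def by metis
        then have "r1 = r2" using dr by (metis append_take_drop_id)
        then show ?thesis using r1 r2 by simp
      next
        case False
        have "g q2 = q2" using gout[OF False] .
        moreover have "\<exists>r. g q1 = p @ r" using r1 gin by auto
        ultimately show ?thesis using eq False by metis
      qed
    next
      case False
      note F1 = False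
      show ?thesis
      proof (cases "\<exists>r. q2 = p @ r")
        case True
        then obtain r2 where r2: "q2 = p @ r2" by blast
        have "g q1 = q1" using gout[OF F1] .
        moreover have "\<exists>r. g q2 = p @ r" using r2 gin by auto
        ultimately show ?thesis using eq F1 by metis
      next
        case False
        then show ?thesis using eq gout F1 by metis
      qed
    qed
  qed
  have fin': "finite (Rd d t')"
    using inj sub fin by (meson finite_Diff finite_imageD finite_subset)
  have "card (Rd d t') = card (g ` Rd d t')" using inj by (simp add: card_image)
  also have "\<dots> \<le> card (Rd d t - {p})" using sub fin by (intro card_mono) auto
  finally have c: "card (Rd d t') \<le> card (Rd d t - {p})" .
  show ?thesis
  proof (cases "length p \<le> d")
    case True
    then have "p \<in> Rd d t" using m by (auto simp: Rd_def)
    moreover have "card (Rd d t) > 0" using fin \<open>p \<in> Rd d t\<close> card_gt_0_iff by blast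
    ultimately have "card (Rd d t - {p}) + 1 = card (Rd d t)" using fin
      by (simp add: card_Diff_singleton)
    then show ?thesis using c fin' True by simp
  next
    case False
    then show ?thesis using c fin' by (simp add: card_Diff_subset) (meson card_Diff1_le dual_order.trans fin)
  qed
qed

lemma fin_pos: "wf_tree ar t \<Longrightarrow> finite {q. length q \<le> d \<and> t q \<noteq> None}"
proof (induction d)
  case 0
  have "{q. length q \<le> 0 \<and> t q \<noteq> None} \<subseteq> {[]}" by auto
  then show ?case using finite_subset by blast
next
  case (Suc d)
  define A where "A = {q. length q \<le> d \<and> t q \<noteq> None}"
  have "{q. length q \<le> Suc d \<and> t q \<noteq> None} \<subseteq> A \<union> (\<Union>p\<in>A. (\<lambda>i. p @ [i]) ` {..<ar (the (t p))})"
  proof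
    fix q assume q: "q \<in> {q. length q \<le> Suc d \<and> t q \<noteq> None}"
    show "q \<in> A \<union> (\<Union>p\<in>A. (\<lambda>i. p @ [i]) ` {..<ar (the (t p))})"
    proof (cases "length q \<le> d")
      case True then show ?thesis using q by (simp add: A_def)
    next
      case False
      then have qne: "q \<noteq> []" by auto
      define p where "p = butlast q"
      define i where "i = last q"
      have qe: "q = p @ [i]" using qne by (simp add: p_def i_def)
      have tq: "t (p @ [i]) \<noteq> None" using q qe by simp
      then have tp: "t p \<noteq> None" using Suc.prems unfolding wf_tree_def by blast
      then obtain a where a: "t p = Some a" by blast
      have "i < ar a" using Suc.prems a tq unfolding wf_tree_def by blast
      moreover have "p \<in> A" using q qe tp by (simp add: A_def)
      ultimately have "p \<in> A" "q \<in> (\<lambda>i. p @ [i]) ` {..<ar (the (t p))}" using qe a by auto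
      then show ?thesis by blast
    qed
  qed
  moreover have "finite (A \<union> (\<Union>p\<in>A. (\<lambda>i. p @ [i]) ` {..<ar (the (t p))}))"
  proof -
    have "finite A" using Suc.IH Suc.prems by (simp add: A_def)
    then show ?thesis by auto
  qed
  ultimately show ?case using finite_subset by blast
qed

lemma fin_Rd: "wf_tree ar t \<Longrightarrow> finite (Rd d t)"
  by (rule finite_subset[OF _ fin_pos[of ar t d]]) (auto simp: Rd_def)

definition minR :: "('f,'r) psym tree \<Rightarrow> nat list \<Rightarrow> bool" where
  "minR t p \<longleftrightarrow> (\<exists>\<mu>. t p = Some (R \<mu>)) \<and> (\<forall>p' \<mu>'. t p' = Some (R \<mu>') \<longrightarrow> length p \<le> length p')"

definition pos :: "('f,'r) psym tree \<Rightarrow> nat list" where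
  "pos t = (SOME p. minR t p)"

definition nxt :: "('r \<Rightarrow> 'f tsym tree) \<Rightarrow> ('f,'r) psym tree \<Rightarrow> ('f,'r) psym tree" where
  "nxt side t = (if \<exists>p \<mu>. t p = Some (R \<mu>) then
     replace t (pos t) (inst (side (SOME \<mu>. t (pos t) = Some (R \<mu>))) (\<lambda>j. subtree t (pos t @ [j])))
     else t)"

lemma minR_pos: assumes "\<exists>p \<mu>. t p = Some (R \<mu>)" shows "minR t (pos t)"
proof -
  from assms obtain p0 where "\<exists>\<mu>. t p0 = Some (R \<mu>)" by blast
  from ex_has_least_nat[of "\<lambda>p. \<exists>\<mu>. t p = Some (R \<mu>)", OF this, of length]
  have "\<exists>p. minR t p" unfolding minR_def by blast
  then show ?thesis unfolding pos_def by (rule someI_ex)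
qed

lemma nxt_step: assumes "\<exists>p \<mu>. t p = Some (R \<mu>)"
  shows "rstep side t (nxt side t) (pos t)"
proof -
  have "\<exists>\<mu>. t (pos t) = Some (R \<mu>)" using minR_pos[OF assms] by (simp add: minR_def)
  then have "t (pos t) = Some (R (SOME \<mu>. t (pos t) = Some (R \<mu>)))" by (rule someI_ex)
  then show ?thesis unfolding rstep_def nxt_def using assms by auto
qed

lemma nf_exists:
  assumes sides: "\<forall>\<mu>. (\<exists>f. side \<mu> [] = Some (Fun f)) \<and> linear_tree (side \<mu>)"
    and wf: "wf_tree ar \<psi>"
  shows "\<exists>u. scred side \<psi> u \<and> no_rule_sym u"
proof -
  define ts where "ts i = (nxt side ^^ i) \<psi>" for i
  have ts0: "ts 0 = \<psi>" by (simp add: ts_def)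
  have tsS: "ts (Suc i) = nxt side (ts i)" for i by (simp add: ts_def)
  have fin: "finite (Rd d (ts i))" for d i
  proof (induction i)
    case 0 then show ?case using fin_Rd[OF wf] ts0 by simp
  next
    case (Suc i)
    show ?case
    proof (cases "\<exists>p \<mu>. ts i p = Some (R \<mu>)")
      case True
      then show ?thesis using Rd_step[OF nxt_step[OF True] sides Suc.IH] tsS by simp
    next
      case False then show ?thesis using Suc.IH tsS by (simp add: nxt_def)
    qed
  qed
  have dec: "Rd d (ts (Suc i)) = {} \<or> card (Rd d (ts (Suc i))) < card (Rd d (ts i))"
    if ne: "Rd d (ts i) \<noteq> {}" for d i
  proof -
    obtain q where q: "q \<in> Rd d (ts i)" using ne by blast
    then have ex: "\<exists>p \<mu>. ts i p = Some (R \<mu>)" by (auto simp: Rd_def)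
    have "length (pos (ts i)) \<le> length q" using minR_pos[OF ex] q by (auto simp: minR_def Rd_def)
    then have "length (pos (ts i)) \<le> d" using q by (auto simp: Rd_def)
    then show ?thesis using Rd_step[OF nxt_step[OF ex] sides fin[of d i]] tsS by simp
  qed
  have keep: "Rd d (ts (Suc i)) = {}" if e: "Rd d (ts i) = {}" for d i
  proof (cases "\<exists>p \<mu>. ts i p = Some (R \<mu>)")
    case True
    have "card (Rd d (ts (Suc i))) \<le> 0" using Rd_step[OF nxt_step[OF True] sides fin[of d i]] tsS e
      by (simp split: if_splits)
    then show ?thesis using fin[of d "Suc i"] by simp
  next
    case False then show ?thesis using e tsS by (simp add: nxt_def)
  qed
  have cnt: "Rd d (ts i) = {} \<or> card (Rd d (ts i)) + i \<le> card (Rd d (ts 0))" for d i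
  proof (induction i)
    case 0 then show ?case by simp
  next
    case (Suc i)
    show ?case
    proof (cases "Rd d (ts i) = {}")
      case True then show ?thesis using keep[of d i] by simp
    next
      case False
      then have "card (Rd d (ts i)) + i \<le> card (Rd d (ts 0))" using Suc.IH by simp
      moreover note dec[OF False]
      ultimately show ?thesis by linarith
    qed
  qed
  define N where "N d = card (Rd d (ts 0))" for d
  have emptyN: "Rd d (ts (N d)) = {}" for d
  proof -
    have "card (Rd d (ts (N d))) + N d \<le> N d \<Longrightarrow> Rd d (ts (N d)) = {}"
      using fin[of d "N d"] by simp
    then show ?thesis using cnt[of d "N d"] by (auto simp: N_def)
  qed
  have emptyge: "Rd d (ts i) = {}" if "i \<ge> N d" for d i
    using that
  proof (induction i)
    case 0 then show ?case using emptyN[of d] by simp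
  next
    case (Suc i)
    show ?case
    proof (cases "N d \<le> i")
      case True then show ?thesis using Suc.IH keep by blast
    next
      case False then have "Suc i = N d" using Suc.prems by simp
      then show ?thesis using emptyN[of d] by simp
    qed
  qed
  have inv: "tr side (ts i) q' b \<longleftrightarrow> tr side \<psi> q' b" for i q' b
  proof (induction i)
    case 0 then show ?case by (simp add: ts0)
  next
    case (Suc i)
    show ?case
    proof (cases "\<exists>p \<mu>. ts i p = Some (R \<mu>)")
      case True then show ?thesis using tr_step[OF nxt_step[OF True]] Suc.IH tsS by simp
    next
      case False then show ?thesis using Suc.IH tsS by (simp add: nxt_def)
    qed
  qed
  show ?thesis
  proof (cases "\<exists>i. \<not> (\<exists>p \<mu>. ts i p = Some (R \<mu>))")
    case True
    define i where "i = (LEAST i. \<not> (\<exists>p \<mu>. ts i p = Some (R \<mu>)))"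
    have i: "\<not> (\<exists>p \<mu>. ts i p = Some (R \<mu>))" unfolding i_def using True by (rule LeastI_ex)
    have imin: "\<forall>i'<i. \<exists>p \<mu>. ts i' p = Some (R \<mu>)"
    proof (intro allI impI)
      fix i' assume "i' < i"
      then show "\<exists>p \<mu>. ts i' p = Some (R \<mu>)" using not_less_Least[of i'] unfolding i_def by blast
    qed
    have "i' \<le> i \<longrightarrow> (\<lambda>a b. \<exists>p. rstep side a b p)\<^sup>*\<^sup>* \<psi> (ts i')" for i'
    proof (induction i')
      case 0 then show ?case by (simp add: ts0)
    next
      case (Suc i')
      show ?case
      proof
        assume "Suc i' \<le> i"
        then have "\<exists>p \<mu>. ts i' p = Some (R \<mu>)" using imin by simp
        from nxt_step[OF this] have "rstep side (ts i') (ts (Suc i')) (pos (ts i'))" using tsS by simp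
        then show "(\<lambda>a b. \<exists>p. rstep side a b p)\<^sup>*\<^sup>* \<psi> (ts (Suc i'))"
          using Suc.IH \<open>Suc i' \<le> i\<close> rtranclp.rtrancl_into_rtrancl[of "\<lambda>a b. \<exists>p. rstep side a b p" \<psi> "ts i'" "ts (Suc i')"]
          by auto
      qed
    qed
    then have "scred side \<psi> (ts i)" by (simp add: scred_def)
    moreover have "no_rule_sym (ts i)" using i by (simp add: no_rule_sym_def)
    ultimately show ?thesis by blast
  next
    case False
    then have allR: "\<forall>i. \<exists>p \<mu>. ts i p = Some (R \<mu>)" by blast
    define ps where "ps i = pos (ts i)" for i
    define u where "u q = ts (N (length q)) q" for q
    have steps: "\<forall>i. rstep side (ts i) (ts (Suc i)) (ps i)"
    proof
      fix i show "rstep side (ts i) (ts (Suc i)) (ps i)"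
        using nxt_step[OF allR[rule_format, of i]] tsS[of i] by (simp add: ps_def)
    qed
    have same: "ts i q = ts j q" if "Rd (length q) (ts i) = {}" "Rd (length q) (ts j) = {}" for i j q
    proof -
      have a: "\<forall>k\<le>length q. \<forall>\<mu>. ts i (take k q) \<noteq> Some (R \<mu>)"
      proof (intro allI impI notI)
        fix k \<mu> assume "k \<le> length q" "ts i (take k q) = Some (R \<mu>)"
        then have "take k q \<in> Rd (length q) (ts i)" by (auto simp: Rd_def)
        then show False using that(1) by simp
      qed
      have b: "\<forall>k\<le>length q. \<forall>\<mu>. ts j (take k q) \<noteq> Some (R \<mu>)"
      proof (intro allI impI notI)
        fix k \<mu> assume "k \<le> length q" "ts j (take k q) = Some (R \<mu>)"
        then have "take k q \<in> Rd (length q) (ts j)" by (auto simp: Rd_def)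
        then show False using that(2) by simp
      qed
      have "ts i q = Some x \<longleftrightarrow> ts j q = Some x" for x
      proof -
        have "ts i q = Some x \<longleftrightarrow> tr side (ts i) q x" using tr_L1[OF a, of side x] by simp
        also have "\<dots> \<longleftrightarrow> tr side (ts j) q x" using inv[of i q x] inv[of j q x] by simp
        also have "\<dots> \<longleftrightarrow> ts j q = Some x" using tr_L1[OF b, of side x] by simp
        finally show ?thesis .
      qed
      note eq = this
      show ?thesis
      proof (cases "ts i q")
        case None then show ?thesis using eq by (cases "ts j q") auto
      next
        case (Some x) then show ?thesis using eq[of x] by simp
      qed
    qed
    have Rmono: "Rd k t \<subseteq> Rd d t" if "k \<le> d" for k d t using that by (auto simp: Rd_def)
    have ag: "agree d (ts i) u" if "i \<ge> N d" for d i
      unfolding agree_def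
    proof (intro allI impI)
      fix q :: "nat list" assume "length q \<le> d"
      then have "Rd (length q) (ts i) \<subseteq> Rd d (ts i)" by (rule Rmono)
      then have "Rd (length q) (ts i) = {}" using emptyge[OF that] by blast
      then show "ts i q = u q" unfolding u_def by (rule same[OF _ emptyN])
    qed
    have lim: "(\<lambda>i. tdist (ts i) u) \<longlonglongrightarrow> 0" by (rule agree_tendsto) (use ag in blast)
    have flim: "filterlim (\<lambda>i. length (ps i)) at_top sequentially"
      unfolding filterlim_at_top eventually_sequentially
    proof
      fix Z
      show "\<exists>N0. \<forall>i\<ge>N0. Z \<le> length (ps i)"
      proof (intro exI allI impI)
        fix i assume "N Z \<le> i"
        then have e: "Rd Z (ts i) = {}" by (rule emptyge)
        have "\<exists>\<mu>. ts i (ps i) = Some (R \<mu>)" using minR_pos[OF allR[rule_format, of i]] ps_def by (simp add: minR_def)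
        then have "\<not> length (ps i) \<le> Z" using e by (auto simp: Rd_def)
        then show "Z \<le> length (ps i)" by simp
      qed
    qed
    have "scred side \<psi> u" unfolding scred_def
      by (rule disjI2, rule exI[of _ ts], rule exI[of _ ps]) (simp add: ts0 steps flim lim)
    moreover have "no_rule_sym u" unfolding no_rule_sym_def
    proof (intro allI)
      fix q :: "nat list" and \<mu>
      show "u q \<noteq> Some (R \<mu>)" using emptyN[of "length q"] by (auto simp: u_def Rd_def)
    qed
    ultimately show ?thesis by blast
  qed
qed

lemma opt_eq: "(\<And>x. a = Some x \<longleftrightarrow> b = Some x) \<Longrightarrow> a = b"
  by (cases a; cases b) auto

lemma multistep_case:
  assumes wf: "wf_trs T" and ms: "is_multistep T \<psi>" and c: "nform (rl_rhs T) \<psi> \<noteq> None"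
  shows "nform (rl_rhs T) \<psi> \<noteq> None \<and> (\<forall>n. enat n < ms_mind \<psi> \<longrightarrow>
     agree n (the (nform (rl_lhs T) \<psi>)) (the (nform (rl_rhs T) \<psi>)))"
proof -
  have sides: "\<forall>\<mu>. (\<exists>f. rl_lhs T \<mu> [] = Some (Fun f)) \<and> linear_tree (rl_lhs T \<mu>)"
    using wf by (simp add: wf_trs_def)
  have wft: "wf_tree (psym_ar T) \<psi>" using ms by (simp add: is_multistep_def)
  obtain uL where uL: "scred (rl_lhs T) \<psi> uL" "no_rule_sym uL" using nf_exists[OF sides wft] by blast
  have eL: "nform (rl_lhs T) \<psi> = Some uL" using nform_eq[OF uL] .
  obtain uR where uR: "scred (rl_rhs T) \<psi> uR" "no_rule_sym uR"
    using c unfolding nform_def by (auto split: if_splits)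
  have eR: "nform (rl_rhs T) \<psi> = Some uR" using nform_eq[OF uR] .
  have "agree n uL uR" if n: "enat n < ms_mind \<psi>" for n
    unfolding agree_def
  proof (intro allI impI)
    fix q :: "nat list" assume q: "length q \<le> n"
    have nr: "\<forall>k\<le>length q. \<forall>\<mu>. \<psi> (take k q) \<noteq> Some (R \<mu>)"
    proof (intro allI impI notI)
      fix k \<mu> assume k: "k \<le> length q" and R: "\<psi> (take k q) = Some (R \<mu>)"
      then have ex: "\<exists>p \<mu>. \<psi> p = Some (R \<mu>)" by blast
      have "(LEAST n. \<exists>p \<mu>. length p = n \<and> \<psi> p = Some (R \<mu>)) \<le> length (take k q)"
        using R by (intro Least_le) blast
      then have "ms_mind \<psi> \<le> enat n" unfolding ms_mind_def using ex q k by simp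
      then show False using n by simp
    qed
    have "uL q = Some x \<longleftrightarrow> uR q = Some x" for x
      using nf_char[OF uL, of q x] nf_char[OF uR, of q x] tr_L1[OF nr, of "rl_lhs T" x] tr_L1[OF nr, of "rl_rhs T" x]
      by simp
    then show "uL q = uR q" by (rule opt_eq)
  qed
  then show ?thesis using eL eR by simp
qed

lemma enat_lt_one_plus: "enat (Suc n) < 1 + X \<Longrightarrow> enat n < X"
  by (cases X) (auto simp: one_enat_def)

lemma main:
  assumes "PT T \<psi> s t c m" "wf_trs T"
  shows "c \<longrightarrow> t \<noteq> None \<and> (\<forall>n. enat n < m \<longrightarrow> agree n s (the t))"
  using assms
proof (induction rule: PT.induct)
  case (multistep \<psi>)
  then show ?case using multistep_case by blast
next
  case (comp \<psi>1 s1 t1 m1 \<psi>2 t2 c2 m2)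
  show ?case
  proof
    assume c2: c2
    have h1: "\<forall>n. enat n < m1 \<longrightarrow> agree n s1 t1" using comp by simp
    have h2: "t2 \<noteq> None \<and> (\<forall>n. enat n < m2 \<longrightarrow> agree n t1 (the t2))" using comp c2 by simp
    show "t2 \<noteq> None \<and> (\<forall>n. enat n < min m1 m2 \<longrightarrow> agree n s1 (the t2))"
      using h1 h2 by (auto intro: agree_trans[of _ s1 t1])
  qed
next
  case (infprod \<psi> s m)
  show ?case
  proof
    assume c: "\<forall>k::nat. \<exists>n. \<forall>j>n. enat k < m j"
    have step: "agree n (s i) (s (Suc i))" if "enat n < m i" for n i
      using infprod.IH[of i] infprod.prems that by simp
    define N where "N k = (SOME n. \<forall>j>n. enat k < m j)" for k
    have NP: "\<forall>j>N k. enat k < m j" for k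
      unfolding N_def using c[rule_format, of k] by (rule someI_ex)
    have chain: "agree k (s i) (s (i + d))" if "i > N k" for k i d
    proof (induction d)
      case 0 then show ?case by (simp add: agree_def)
    next
      case (Suc d)
      have "agree k (s (i + d)) (s (Suc (i + d)))" using step NP[of k] that by simp
      then show ?case using Suc.IH agree_trans by fastforce
    qed
    define u where "u q = s (Suc (N (length q))) q" for q
    have ag: "agree k (s i) u" if "i > N k" for k i
      unfolding agree_def
    proof (intro allI impI)
      fix q :: "nat list" assume q: "length q \<le> k"
      define J where "J = max i (Suc (N (length q)))"
      have "agree k (s i) (s (i + (J - i)))" using chain that by blast
      then have a1: "s i q = s J q" using q by (simp add: agree_def J_def)
      have "agree (length q) (s (Suc (N (length q)))) (s (Suc (N (length q)) + (J - Suc (N (length q)))))"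
        by (rule chain) simp
      then have a2: "s (Suc (N (length q))) q = s J q" by (simp add: agree_def J_def)
      show "s i q = u q" using a1 a2 by (simp add: u_def)
    qed
    have lim: "(\<lambda>i. tdist (s (Suc i)) u) \<longlonglongrightarrow> 0"
    proof (rule agree_tendsto)
      fix k show "\<exists>N0. \<forall>i\<ge>N0. agree k (s (Suc i)) u" using ag[of k] by (intro exI[of _ "N k"]) auto
    qed
    have the: "(THE u. (\<lambda>i. tdist (s (Suc i)) u) \<longlonglongrightarrow> 0) = u"
    proof (rule the_equality)
      show "(\<lambda>i. tdist (s (Suc i)) u) \<longlonglongrightarrow> 0" by (rule lim)
      fix v assume "(\<lambda>i. tdist (s (Suc i)) v) \<longlonglongrightarrow> 0"
      then show "v = u" using tendsto_uniq_tree[OF _ lim] by blast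
    qed
    have b: "agree n (s 0) u" if n: "enat n < (INF i. m i)" for n
    proof -
      have mi: "enat n < m i" for i using n INF_lower[of i UNIV m] by (meson UNIV_I less_le_trans)
      have "agree n (s 0) (s i)" for i
      proof (induction i)
        case 0 then show ?case by (simp add: agree_def)
      next
        case (Suc i) then show ?case using step[OF mi] agree_trans by blast
      qed
      then show ?thesis using ag[of n "Suc (N n)"] agree_trans by blast
    qed
    show "(if \<exists>u. (\<lambda>i. tdist (s (Suc i)) u) \<longlonglongrightarrow> 0
         then Some (THE u. (\<lambda>i. tdist (s (Suc i)) u) \<longlonglongrightarrow> 0) else None) \<noteq> None \<and>
       (\<forall>n. enat n < (INF i. m i) \<longrightarrow> agree n (s 0) (the (if \<exists>u. (\<lambda>i. tdist (s (Suc i)) u) \<longlonglongrightarrow> 0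
         then Some (THE u. (\<lambda>i. tdist (s (Suc i)) u) \<longlonglongrightarrow> 0) else None)))"
      using lim the b by auto
  qed
next
  case (func \<psi>s f ss ts cs ms)
  show ?case
  proof
    assume c: "\<forall>i<length cs. cs ! i"
    have h: "ts ! i \<noteq> None \<and> (\<forall>n. enat n < ms ! i \<longrightarrow> agree n (ss ! i) (the (ts ! i)))"
      if "i < length \<psi>s" for i
      using func.IH that c func.prems func.hyps by auto
    have tn: "\<forall>i<length ts. ts ! i \<noteq> None" using h func.hyps by simp
    have b: "agree n (node (F f) ss) (node (F f) (map the ts))"
      if n: "enat n < 1 + (INF i \<in> {..<length ms}. ms ! i)" for n
    proof (cases n)
      case 0 then show ?thesis by (simp add: agree_def node_def)
    next
      case (Suc n')
      then have n': "enat n' < (INF i \<in> {..<length ms}. ms ! i)" using n enat_lt_one_plus by blast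
      have mi: "enat n' < ms ! i" if "i < length ms" for i
        using n' INF_lower[of i "{..<length ms}" "(!) ms"] that by (meson lessThan_iff less_le_trans)
      show ?thesis unfolding agree_def
      proof (intro allI impI)
        fix q :: "nat list" assume q: "length q \<le> n"
        show "node (F f) ss q = node (F f) (map the ts) q"
        proof (cases q)
          case Nil then show ?thesis by (simp add: node_def)
        next
          case (Cons i q')
          show ?thesis
          proof (cases "i < length ss")
            case True
            then have "agree n' (ss ! i) (the (ts ! i))" using h[of i] mi[of i] func.hyps by simp
            then have "(ss ! i) q' = (the (ts ! i)) q'" using q Cons Suc by (simp add: agree_def)
            then show ?thesis using Cons True func.hyps by (simp add: node_def)
          next
            case False then show ?thesis using Cons func.hyps by (simp add: node_def)
          qed
        qed
      qed
    qed
    show "(if \<forall>i<length ts. ts ! i \<noteq> None then Some (node (F f) (map the ts)) else None) \<noteq> None \<and>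
       (\<forall>n. enat n < 1 + (INF i \<in> {..<length ms}. ms ! i) \<longrightarrow>
          agree n (node (F f) ss) (the (if \<forall>i<length ts. ts ! i \<noteq> None then Some (node (F f) (map the ts)) else None)))"
      using tn b by simp
  qed
next
  case (rule \<psi>s \<mu> ss ts cs ms)
  show ?case
  proof
    assume c: "\<forall>i<length cs. i \<in> tvars (rl_rhs T \<mu>) \<longrightarrow> cs ! i"
    have tv: "tvars (rl_rhs T \<mu>) \<subseteq> {..<rl_ar T \<mu>}" using rule.prems unfolding wf_trs_def by metis
    have "\<forall>j\<in>tvars (rl_rhs T \<mu>). ts ! j \<noteq> None"
    proof
      fix j assume j: "j \<in> tvars (rl_rhs T \<mu>)"
      then have jl: "j < length \<psi>s" using tv rule.hyps by auto
      then have "cs ! j" using c j rule.hyps by simp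
      then show "ts ! j \<noteq> None" using rule.IH jl rule.prems by auto
    qed
    then show "inst_opt (rl_rhs T \<mu>) ((!) ts) \<noteq> None \<and>
       (\<forall>n. enat n < 0 \<longrightarrow> agree n (inst (rl_lhs T \<mu>) ((!) ss)) (the (inst_opt (rl_rhs T \<mu>) ((!) ts))))"
      by (simp add: inst_opt_def)
  qed
qed

theorem mainTheorem9:
  fixes T :: "('f, 'r) trs" and \<psi> :: "('f, 'r) psym tree"
  assumes "wf_trs T"
    and "PT T \<psi> s t True m"
  shows "t \<noteq> None \<and> (\<forall>n::nat. enat n < m \<longrightarrow> tdist s (the t) < (1/2) ^ n)"
  using main[OF assms(2,1)] tdist_lt_iff by auto

end
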